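(* Suppose $\operatorname{tr}\big((I-\widehat\Pi)\Pi^*\big)\le\delta^2$ for some $\delta\in[0,1)$, and let $\widehat\Pi_{m^*}$ be the orthogonal projector onto the subspace spanned by eigenvectors of $\widehat\Pi$ corresponding to its $m^*$ largest eigenvalues. Then $\operatorname{tr}\big((I-\widehat\Pi_{m^*})\Pi^*\big)\le\delta^2/(1-\delta^2)$.
   Context: $\Pi^*$ is the orthogonal projector onto an $m^*$-dimensional subspace of $\mathbb R^d$. $I$ is the $d\times d$ identity, $A\preceq B$ means $B-A$ is positive semidefinite. Let $\hat\beta_1,\dots,\hat\beta_L\in\mathbb R^d$ be arbitrary vectors, $\mathcal A_{m^*}=\{\Pi\in\mathbb R^{d\times d}:\Pi=\Pi^\top,\ 0\preceq\Pi\preceq I,\ \operatorname{tr}\Pi\le m^*\}$, and let $\widehat\Pi$ be a minimizer over $\Pi\in\mathcal A_{m^*}$ of $\max_\ell\hat\beta_\ell^\top(I-\Pi)\hat\beta_\ell$. *)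

theory Defs
  imports "HOL-Analysis.Analysis"
begin

definition loewner_le :: "real^'n^'n \<Rightarrow> real^'n^'n \<Rightarrow> bool" where
  "loewner_le A B \<longleftrightarrow> (\<forall>x::real^'n. 0 \<le> x \<bullet> ((B - A) *v x))"

definition orth_proj :: "real^'n^'n \<Rightarrow> bool" where
  "orth_proj P \<longleftrightarrow> transpose P = P \<and> P ** P = P"

definition constr_set :: "nat \<Rightarrow> (real^'n^'n) set" where
  "constr_set m = {P. transpose P = P \<and> loewner_le 0 P \<and> loewner_le P (mat 1) \<and> trace P \<le> real m}"

definition objective :: "(nat \<Rightarrow> real^'n) \<Rightarrow> nat \<Rightarrow> real^'n^'n \<Rightarrow> real" where
  "objective beta L P = Max ((\<lambda>l. beta l \<bullet> ((mat 1 - P) *v beta l)) ` {1..L})"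

definition outer :: "real^'n \<Rightarrow> real^'n \<Rightarrow> real^'n^'n" where
  "outer u v = (\<chi> i j. u $ i * v $ j)"

text \<open>Q is the orthogonal projector onto the span of eigenvectors of P corresponding to its
  m largest eigenvalues: there is an orthonormal eigenbasis u_0..u_{d-1} of P with eigenvalues
  sorted in nonincreasing order such that Q = sum_{i<m} u_i u_i^T.\<close>
definition top_eig_proj :: "real^'n^'n \<Rightarrow> nat \<Rightarrow> real^'n^'n \<Rightarrow> bool" where
  "top_eig_proj P m Q \<longleftrightarrow>
     (\<exists>(u::nat \<Rightarrow> real^'n) (lam::nat \<Rightarrow> real).
        (\<forall>i<CARD('n). \<forall>j<CARD('n). u i \<bullet> u j = (if i = j then 1 else 0)) \<and>
        (\<forall>i<CARD('n). P *v u i = lam i *\<^sub>R u i) \<and>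
        (\<forall>i j. i \<le> j \<longrightarrow> j < CARD('n) \<longrightarrow> lam j \<le> lam i) \<and>
        Q = (\<Sum>i<m. outer (u i) (u i)))"

end

theory Submission imports Defs begin
lemma outer_mult: "outer u v *v x = (v \<bullet> x) *\<^sub>R u"
  by (simp add: outer_def matrix_vector_mult_def inner_vec_def vec_eq_iff sum_distrib_left mult_ac)

lemma sum_mv: "finite S \<Longrightarrow> (\<Sum>i\<in>S. f i) *v x = (\<Sum>i\<in>S. f i *v x)"
  by (induction S rule: finite_induct) (auto simp: matrix_vector_mult_add_rdistrib)

lemma mm_sum: "finite S \<Longrightarrow> (M::real^'n^'n) ** (\<Sum>i\<in>S. f i) = (\<Sum>i\<in>S. M ** f i)"
  by (induction S rule: finite_induct) (auto simp: matrix_add_ldistrib)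

lemma trace_sum: "finite S \<Longrightarrow> trace (\<Sum>i\<in>S. (f i::real^'n^'n)) = (\<Sum>i\<in>S. trace (f i))"
  by (induction S rule: finite_induct) (auto simp: trace_add trace_0[unfolded mat_0, simplified])

lemma trace_outer: "trace ((M::real^'n^'n) ** outer b b) = b \<bullet> (M *v b)"
  by (simp add: trace_def outer_def matrix_matrix_mult_def matrix_vector_mult_def inner_vec_def
      sum_distrib_left mult_ac)

lemma sum_outer_id:
  fixes B :: "(real^'n) set"
  assumes "finite B" "pairwise orthogonal B" "\<And>b. b \<in> B \<Longrightarrow> norm b = 1" "span B = UNIV"
  shows "(\<Sum>b\<in>B. outer b b) = mat 1"
proof -
  have "(\<Sum>b\<in>B. outer b b) *v x = mat 1 *v x" for x
  proof -
    have "(\<Sum>b\<in>B. outer b b) *v x = (\<Sum>b\<in>B. (x \<bullet> b) *\<^sub>R b)"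
      by (simp add: sum_mv assms outer_mult inner_commute)
    also have "\<dots> = x" using orthonormal_basis_expand[of B x] assms by auto
    finally show ?thesis by simp
  qed
  then show ?thesis by (simp add: matrix_eq)
qed

lemma trace_onb:
  fixes B :: "(real^'n) set" and M :: "real^'n^'n"
  assumes "finite B" "pairwise orthogonal B" "\<And>b. b \<in> B \<Longrightarrow> norm b = 1" "span B = UNIV"
  shows "trace M = (\<Sum>b\<in>B. b \<bullet> (M *v b))"
proof -
  have "trace M = trace (M ** (\<Sum>b\<in>B. outer b b))" using sum_outer_id[OF assms] by simp
  also have "\<dots> = (\<Sum>b\<in>B. b \<bullet> (M *v b))"
    by (simp add: mm_sum trace_sum assms trace_outer)
  finally show ?thesis .
qed

lemma sym_inner: "transpose P = P \<Longrightarrow> x \<bullet> ((P::real^'n^'n) *v y) = (P *v x) \<bullet> y"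
  by (metis dot_lmul_matrix vector_transpose_matrix)

lemma trace_proj:
  fixes P :: "real^'n^'n"
  assumes sym: "transpose P = P" and idem: "P ** P = P"
    and onb: "\<And>B::(real^'n) set. \<lbrakk>finite B; pairwise orthogonal B; \<And>b. b \<in> B \<Longrightarrow> norm b = 1; span B = UNIV\<rbrakk>
       \<Longrightarrow> trace P = (\<Sum>b\<in>B. b \<bullet> (P *v b))"
  shows "trace P = real (rank P)"
proof -
  define V where "V = range (\<lambda>x. P *v x)"
  define W where "W = {x. P *v x = 0}"
  have sV: "subspace V" unfolding V_def
    using linear_subspace_image[OF matrix_vector_mul_linear[of P] subspace_UNIV] by (simp add: image_def)
  have sW: "subspace W" unfolding W_def
    using linear_subspace_kernel[OF matrix_vector_mul_linear[of P]] by simp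
  obtain B where B: "B \<subseteq> V" "pairwise orthogonal B" "\<And>x. x \<in> B \<Longrightarrow> norm x = 1"
     "independent B" "card B = dim V" "span B = V"
    using orthonormal_basis_subspace[OF sV] by metis
  obtain C where C: "C \<subseteq> W" "pairwise orthogonal C" "\<And>x. x \<in> C \<Longrightarrow> norm x = 1"
     "independent C" "card C = dim W" "span C = W"
    using orthonormal_basis_subspace[OF sW] by metis
  have fB: "finite B" "finite C" using B(4) C(4) independent_imp_finite by auto
  have PV: "P *v v = v" if "v \<in> V" for v
    using that idem unfolding V_def by (auto simp: matrix_vector_mul_assoc)
  have PB: "P *v b = b" if "b \<in> B" for b using PV B(1) that by auto
  have PC: "P *v c = 0" if "c \<in> C" for c using C(1) that unfolding W_def by auto
  have BC: "b \<bullet> c = 0" if "b \<in> B" "c \<in> C" for b c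
  proof -
    have "b \<bullet> c = (P *v b) \<bullet> c" using PB that by simp
    also have "\<dots> = b \<bullet> (P *v c)" using sym_inner[OF sym] by simp
    finally show ?thesis using PC that by simp
  qed
  have disj: "B \<inter> C = {}"
  proof (rule ccontr)
    assume "B \<inter> C \<noteq> {}"
    then obtain x where "x \<in> B" "x \<in> C" by auto
    then have "x \<bullet> x = 0" using BC by auto
    then show False using B(3) \<open>x \<in> B\<close> by fastforce
  qed
  have orth: "pairwise orthogonal (B \<union> C)"
    using B(2) C(2) BC unfolding pairwise_def orthogonal_def
    by (auto, metis inner_commute)
  have spanD: "span (B \<union> C) = UNIV"
  proof -
    have "x \<in> span (B \<union> C)" for x
    proof -
      have "P *v x \<in> span (B \<union> C)" using B(6) span_mono[of B "B \<union> C"] unfolding V_def by auto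
      moreover have "x - P *v x \<in> span (B \<union> C)"
      proof -
        have "P *v (x - P *v x) = 0" using idem
          by (simp add: matrix_vector_mult_diff_distrib matrix_vector_mul_assoc)
        then have "x - P *v x \<in> W" unfolding W_def by simp
        then show ?thesis using C(6) span_mono[of C "B \<union> C"] by auto
      qed
      ultimately have "P *v x + (x - P *v x) \<in> span (B \<union> C)" by (rule span_add)
      then show ?thesis by simp
    qed
    then show ?thesis by auto
  qed
  have "trace P = (\<Sum>b\<in>B \<union> C. b \<bullet> (P *v b))"
    by (rule onb) (use fB orth spanD B(3) C(3) in auto)
  also have "\<dots> = (\<Sum>b\<in>B. b \<bullet> (P *v b)) + (\<Sum>b\<in>C. b \<bullet> (P *v b))"
    by (rule sum.union_disjoint) (use fB disj in auto)
  also have "(\<Sum>b\<in>B. b \<bullet> (P *v b)) = (\<Sum>b\<in>B. 1)"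
    using PB B(3) by (intro sum.cong) (auto simp: inner_commute dot_square_norm)
  also have "(\<Sum>b\<in>C. b \<bullet> (P *v b)) = 0" using PC by simp
  finally have "trace P = real (card B)" by simp
  then show ?thesis using B(5) rank_dim_range[of P] V_def by simp
qed

lemma arith_core:
  fixes lam a :: "nat \<Rightarrow> real" and d m :: nat and D :: real
  assumes md: "m \<le> d"
    and sorted: "\<And>i j. i \<le> j \<Longrightarrow> j < d \<Longrightarrow> lam j \<le> lam i"
    and lam01: "\<And>i. i < d \<Longrightarrow> 0 \<le> lam i \<and> lam i \<le> 1"
    and a01: "\<And>i. i < d \<Longrightarrow> 0 \<le> a i \<and> a i \<le> 1"
    and slam: "(\<Sum>i<d. lam i) \<le> real m"
    and sa: "(\<Sum>i<d. a i) \<ge> real m"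
    and main: "(\<Sum>i<d. (1 - lam i) * a i) \<le> D"
    and D: "0 \<le> D" "D < 1"
  shows "(\<Sum>i\<in>{m..<d}. a i) \<le> D / (1 - D)"
proof (cases "m = d")
  case True
  then show ?thesis using D by simp
next
  case False
  with md have md': "m < d" by simp
  define \<mu> where "\<mu> = lam m"
  define s where "s = (\<Sum>i\<in>{m..<d}. a i)"
  define A where "A = (\<Sum>i<d. a i)"
  define S where "S = (\<Sum>i<d. lam i * a i)"
  have split: "\<And>f::nat\<Rightarrow>real. (\<Sum>i<d. f i) = (\<Sum>i<m. f i) + (\<Sum>i\<in>{m..<d}. f i)"
    using md by (metis atLeast0LessThan le0 sum.atLeastLessThan_concat)
  have h1: "A - S \<le> D" using main unfolding A_def S_def
    by (simp add: left_diff_distrib sum_subtractf)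
  have s0: "0 \<le> s" unfolding s_def using a01 by (intro sum_nonneg) auto
  have mu01: "0 \<le> \<mu>" "\<mu> \<le> 1" using lam01 md' \<mu>_def by auto
  have h2: "S \<le> A - s + \<mu> * s"
  proof -
    have "(\<Sum>i<m. lam i * a i) \<le> (\<Sum>i<m. a i)"
      using lam01 a01 md' by (intro sum_mono) (simp add: mult_left_le_one_le)
    moreover have "(\<Sum>i\<in>{m..<d}. lam i * a i) \<le> (\<Sum>i\<in>{m..<d}. \<mu> * a i)"
      using sorted a01 \<mu>_def by (intro sum_mono) (simp add: mult_right_mono)
    ultimately show ?thesis unfolding S_def A_def s_def
      using split[of "\<lambda>i. lam i * a i"] split[of a] by (simp add: sum_distrib_left)
  qed
  have h3: "S \<le> real m - \<mu> + \<mu> * (A - real m)"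
  proof -
    have "(\<Sum>i<m. lam i * a i) \<le> (\<Sum>i<m. lam i - \<mu> * (1 - a i))"
    proof (intro sum_mono)
      fix i assume "i \<in> {..<m}"
      then have "\<mu> \<le> lam i" "a i \<le> 1" using sorted a01 md' \<mu>_def by auto
      then have "\<mu> * (1 - a i) \<le> lam i * (1 - a i)" by (simp add: mult_right_mono)
      then show "lam i * a i \<le> lam i - \<mu> * (1 - a i)" by (simp add: algebra_simps)
    qed
    also have "\<dots> = (\<Sum>i<m. lam i) - \<mu> * (real m - (A - s))"
      unfolding A_def s_def using split[of a]
      by (simp add: sum_subtractf sum_distrib_left[symmetric])
    finally have hd: "(\<Sum>i<m. lam i * a i) \<le> (\<Sum>i<m. lam i) - \<mu> * (real m - (A - s))" .
    have tl: "(\<Sum>i\<in>{m..<d}. lam i * a i) \<le> \<mu> * s"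
      using sorted a01 \<mu>_def unfolding s_def
      by (simp add: sum_distrib_left, intro sum_mono) (simp add: mult_right_mono)
    have "(\<Sum>i\<in>{m..<d}. lam i) \<ge> \<mu>"
    proof -
      have "(\<Sum>i\<in>{m..<d}. lam i) = lam m + (\<Sum>i\<in>{Suc m..<d}. lam i)"
        using md' by (simp add: sum.atLeast_Suc_lessThan)
      moreover have "(\<Sum>i\<in>{Suc m..<d}. lam i) \<ge> 0" using lam01 by (intro sum_nonneg) auto
      ultimately show ?thesis using \<mu>_def by simp
    qed
    then have f1: "(\<Sum>i<m. lam i) \<le> real m - \<mu>" using slam split[of lam] by simp
    have f2: "S \<le> (\<Sum>i<m. lam i) - \<mu> * (real m - (A - s)) + \<mu> * s"
      using hd tl split[of "\<lambda>i. lam i * a i"] unfolding S_def by linarith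
    have f3: "\<mu> * (real m - (A - s)) = \<mu> * real m - \<mu> * A + \<mu> * s"
      by (simp add: algebra_simps)
    have f4: "\<mu> * (A - real m) = \<mu> * A - \<mu> * real m"
      by (simp add: algebra_simps)
    show ?thesis unfolding f4 using f1 f2 unfolding f3 by linarith
  qed
  have Am: "A \<ge> real m" using sa A_def by simp
  have muD: "\<mu> \<le> D"
  proof -
    have "(A - real m) * (1 - \<mu>) \<ge> 0" using Am mu01 by simp
    then show ?thesis using h1 h3 by (simp add: algebra_simps)
  qed
  have "s * (1 - D) \<le> s * (1 - \<mu>)" using s0 muD by (simp add: mult_left_mono)
  also have "\<dots> \<le> D" using h1 h2 by (simp add: algebra_simps)
  finally have "s * (1 - D) \<le> D" .
  then show ?thesis using D unfolding s_def[symmetric] by (simp add: pos_le_divide_eq)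
qed

theorem lemma3:
  fixes Pstar Phat Phat_m :: "real^'n^'n"
    and m :: nat and beta :: "nat \<Rightarrow> real^'n" and L :: nat and \<delta> :: real
  assumes Pstar: "orth_proj Pstar" "rank Pstar = m"
    and L: "L \<ge> 1"
    and Phat_feas: "Phat \<in> constr_set m"
    and Phat_min: "\<forall>P \<in> constr_set m. objective beta L Phat \<le> objective beta L P"
    and delta: "0 \<le> \<delta>" "\<delta> < 1"
    and tr: "trace ((mat 1 - Phat) ** Pstar) \<le> \<delta>\<^sup>2"
    and top: "top_eig_proj Phat m Phat_m"
  shows "trace ((mat 1 - Phat_m) ** Pstar) \<le> \<delta>\<^sup>2 / (1 - \<delta>\<^sup>2)"
proof -
  define d where "d = CARD('n)"
  obtain u :: "nat \<Rightarrow> real^'n" and lam :: "nat \<Rightarrow> real" where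
    uu: "\<And>i j. i < d \<Longrightarrow> j < d \<Longrightarrow> u i \<bullet> u j = (if i = j then 1 else 0)" and
    eig: "\<And>i. i < d \<Longrightarrow> Phat *v u i = lam i *\<^sub>R u i" and
    sorted: "\<And>i j. i \<le> j \<Longrightarrow> j < d \<Longrightarrow> lam j \<le> lam i" and
    Qdef: "Phat_m = (\<Sum>i<m. outer (u i) (u i))"
    using top unfolding top_eig_proj_def d_def by blast
  have sym: "transpose Pstar = Pstar" and idem: "Pstar ** Pstar = Pstar"
    using Pstar(1) unfolding orth_proj_def by auto
  have md: "m \<le> d" using rank_bound[of Pstar] Pstar(2) d_def by simp
  have inj: "inj_on u {..<d}"
  proof (rule inj_onI)
    fix i j assume "i \<in> {..<d}" "j \<in> {..<d}" "u i = u j"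
    then show "i = j" using uu[of i j] uu[of i i] by (auto split: if_splits)
  qed
  define U where "U = u ` {..<d}"
  have fU: "finite U" unfolding U_def by simp
  have oU: "pairwise orthogonal U" unfolding U_def pairwise_def orthogonal_def
    using uu by auto
  have nU: "\<And>b. b \<in> U \<Longrightarrow> norm b = 1" unfolding U_def using uu by (auto simp: norm_eq_1)
  have sU: "span U = UNIV"
  proof -
    have "0 \<notin> U" using nU by fastforce
    then have ind: "independent U" using pairwise_orthogonal_independent oU by blast
    have "card U = d" unfolding U_def using card_image[OF inj] by simp
    then have "dim U = DIM(real^'n)" using dim_eq_card_independent[OF ind] d_def by simp
    then show ?thesis using dim_eq_full by blast
  qed
  have trU: "trace M = (\<Sum>i<d. u i \<bullet> (M *v u i))" for M :: "real^'n^'n"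
    using trace_onb[OF fU oU nU sU, of M] sum.reindex[OF inj] unfolding U_def by simp
  define a where "a i = u i \<bullet> (Pstar *v u i)" for i
  have lam_eq: "lam i = u i \<bullet> (Phat *v u i)" if "i < d" for i
    using eig[OF that] uu[OF that that] by simp
  have lam01: "0 \<le> lam i \<and> lam i \<le> 1" if "i < d" for i
  proof -
    have "loewner_le 0 Phat" "loewner_le Phat (mat 1)" using Phat_feas unfolding constr_set_def by auto
    then have "0 \<le> u i \<bullet> ((Phat - 0) *v u i)" "0 \<le> u i \<bullet> ((mat 1 - Phat) *v u i)"
      unfolding loewner_le_def by blast+
    then show ?thesis using lam_eq[OF that] uu[OF that that]
      by (simp add: matrix_vector_mult_diff_rdistrib inner_diff_right)
  qed
  have PP: "Pstar *v (Pstar *v x) = Pstar *v x" for x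
    using idem by (simp add: matrix_vector_mul_assoc)
  have a01: "0 \<le> a i \<and> a i \<le> 1" if "i < d" for i
  proof -
    have aeq: "a i = (Pstar *v u i) \<bullet> (Pstar *v u i)"
      unfolding a_def using sym_inner[OF sym, of "u i" "Pstar *v u i"] PP by simp
    have "0 \<le> (u i - Pstar *v u i) \<bullet> (u i - Pstar *v u i)" by simp
    also have "\<dots> = u i \<bullet> u i - 2 * a i + (Pstar *v u i) \<bullet> (Pstar *v u i)"
      unfolding a_def by (simp add: inner_diff_left inner_diff_right inner_commute)
    finally show ?thesis using aeq uu[OF that that] by simp
  qed
  have slam: "(\<Sum>i<d. lam i) \<le> real m"
    using Phat_feas trU[of Phat] lam_eq unfolding constr_set_def by simp
  have sa: "(\<Sum>i<d. a i) \<ge> real m"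
  proof -
    have "trace Pstar = real (rank Pstar)"
      by (rule trace_proj[OF sym idem]) (rule trace_onb)
    then show ?thesis using trU[of Pstar] Pstar(2) unfolding a_def by simp
  qed
  have main: "(\<Sum>i<d. (1 - lam i) * a i) \<le> \<delta>\<^sup>2"
  proof -
    have "trace ((mat 1 - Phat) ** Pstar) = trace (Pstar ** (mat 1 - Phat))" by (rule trace_mul_sym)
    also have "\<dots> = (\<Sum>i<d. (1 - lam i) * a i)"
      unfolding trU
    proof (intro sum.cong refl)
      fix i assume "i \<in> {..<d}"
      then have "(mat 1 - Phat) *v u i = (1 - lam i) *\<^sub>R u i" using eig
        by (simp add: matrix_vector_mult_diff_rdistrib algebra_simps)
      then show "u i \<bullet> ((Pstar ** (mat 1 - Phat)) *v u i) = (1 - lam i) * a i"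
        unfolding a_def by (simp add: matrix_vector_mul_assoc[symmetric] matrix_vector_mult_scaleR)
    qed
    finally show ?thesis using tr by simp
  qed
  have goal: "trace ((mat 1 - Phat_m) ** Pstar) = (\<Sum>i\<in>{m..<d}. a i)"
  proof -
    have Qu: "Phat_m *v u j = (if j < m then u j else 0)" if "j < d" for j
    proof -
      have "Phat_m *v u j = (\<Sum>i<m. (u i \<bullet> u j) *\<^sub>R u i)"
        unfolding Qdef by (simp add: sum_mv outer_mult)
      also have "\<dots> = (\<Sum>i<m. (if i = j then u i else 0))"
        using uu that md by (intro sum.cong refl) auto
      also have "\<dots> = (if j < m then u j else 0)" by (simp add: sum.delta)
      finally show ?thesis .
    qed
    have "trace ((mat 1 - Phat_m) ** Pstar) = trace (Pstar ** (mat 1 - Phat_m))" by (rule trace_mul_sym)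
    also have "\<dots> = (\<Sum>i<d. (if i < m then 0 else a i))"
      unfolding trU
    proof (intro sum.cong refl)
      fix i assume "i \<in> {..<d}"
      then show "u i \<bullet> ((Pstar ** (mat 1 - Phat_m)) *v u i) = (if i < m then 0 else a i)"
        unfolding a_def using Qu[of i]
        by (simp add: matrix_vector_mul_assoc[symmetric] matrix_vector_mult_diff_rdistrib)
    qed
    also have "\<dots> = (\<Sum>i\<in>{m..<d}. a i)"
    proof -
      have "{..<d} = {..<m} \<union> {m..<d}" using md by auto
      then have "(\<Sum>i<d. (if i < m then 0 else a i)) = (\<Sum>i<m. (if i < m then 0 else a i)) + (\<Sum>i\<in>{m..<d}. (if i < m then 0 else a i))"
        by (simp add: sum.union_disjoint ivl_disj_int)
      then show ?thesis by simp
    qed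
    finally show ?thesis .
  qed
  have "0 \<le> \<delta>\<^sup>2" "\<delta>\<^sup>2 < 1" using delta by (auto simp: power_less_one_iff abs_square_less_1)
  then show ?thesis unfolding goal
    using arith_core[OF md sorted lam01 a01 slam sa main] by blast
qed

end
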